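(* Let $p$ be an odd prime, $\alpha>1$ any integer with $\gcd(p,\alpha)=1$, and $\gamma=\operatorname{ord}_p(\alpha)$. Then for all positive integers $a,n$ with $a\geq \gamma p$, $$S_p^n(a)\leq 8\,\big(\log_p a\big)^{n-1}\, a^{\log_p\left(\frac{p+1}{2}\right)} .$$
   Context: A base-$p$ digit $d\in\{0,\dots,p-1\}$ is called small if $d<p/2$ and large otherwise. For integers $a,n\ge1$, $S_p^n(a)=\#\{0\le s<a : \text{the base-}p\text{ representation of }\alpha^s\text{ contains fewer than } n \text{ large digits}\}$ (this depends on the fixed $\alpha$). *)

theory Defs
  imports "HOL-Analysis.Analysis" "HOL-Number_Theory.Number_Theory"
begin

definition digit :: "nat \<Rightarrow> nat \<Rightarrow> nat \<Rightarrow> nat" where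
  "digit p m i = (m div p ^ i) mod p"

text \<open>A digit d is large iff d \<ge> p/2, i.e. 2 d \<ge> p. Leading zeros are small, so
  counting positions over all i is the same as over the actual representation.\<close>
definition num_large_digits :: "nat \<Rightarrow> nat \<Rightarrow> nat" where
  "num_large_digits p m = card {i. p \<le> 2 * digit p m i}"

definition S :: "nat \<Rightarrow> nat \<Rightarrow> nat \<Rightarrow> nat \<Rightarrow> nat" where
  "S p \<alpha> n a = card {s. s < a \<and> num_large_digits p (\<alpha> ^ s) < n}"

end

theory Submission
  imports Defs
begin


lemma binom3:
  fixes X :: int
  shows "\<exists>R. (1+X)^i = 1 + int i * X + int (i choose 2) * X^2 + X^3 * R"
proof (induction i)
  case 0 then show ?case by (auto intro: exI[of _ 0])
next
  case (Suc i)
  then obtain R where R: "(1+X)^i = 1 + int i * X + int (i choose 2) * X^2 + X^3 * R" by blast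
  have c: "Suc i choose 2 = i + (i choose 2)"
    by (simp add: numeral_2_eq_2)
  have "(1+X)^Suc i = (1 + int i * X + int (i choose 2) * X^2 + X^3 * R) * (1+X)"
    using R by simp
  also have "\<dots> = 1 + int (Suc i) * X + int (Suc i choose 2) * X^2 + X^3 * (int (i choose 2) + R + R*X)"
    unfolding c by (simp add: algebra_simps power2_eq_square power3_eq_cube)
  finally show ?case by blast
qed

lemma lte_step:
  fixes p :: nat and w :: int
  assumes "prime p" "odd p" "\<not> int p dvd w"
  shows "\<exists>w'. (1 + int p^(Suc u) * w)^p = 1 + int p^(Suc (Suc u)) * w' \<and> \<not> int p dvd w'"
proof -
  define P where "P = int p"
  have p3: "p \<ge> 3" using assms prime_ge_2_nat[of p] by (cases "p = 2") auto
  have "p dvd (p choose 2)"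
    using p3 assms by (intro dvd_choose_prime) auto
  then obtain c where c: "p choose 2 = p * c" by blast
  obtain R where R: "(1 + P^(Suc u) * w)^p = 1 + int p * (P^(Suc u) * w) + int (p choose 2) * (P^(Suc u) * w)^2 + (P^(Suc u) * w)^3 * R"
    using binom3 by blast
  define w' where "w' = w + P * (int c * P^u * w^2 + P^u * P^u * w^3 * R)"
  have "(1 + P^(Suc u) * w)^p = 1 + P^(Suc (Suc u)) * w'"
    unfolding R w'_def c by (simp add: P_def algebra_simps power2_eq_square power3_eq_cube power_add power_mult_distrib mult_2)
  moreover have "\<not> P dvd w'"
    using assms(3) unfolding w'_def P_def by (simp add: dvd_add_left_iff)
  ultimately show ?thesis unfolding P_def by blast
qed

lemma lte:
  fixes p :: nat and w :: int
  assumes "prime p" "odd p" "\<not> int p dvd w" "v \<ge> 1"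
  shows "\<exists>w'. (1 + int p^v * w)^(p^j) = 1 + int p^(v+j) * w' \<and> \<not> int p dvd w'"
proof (induction j)
  case 0 then show ?case using assms by auto
next
  case (Suc j)
  then obtain w1 where w1: "(1 + int p^v * w)^(p^j) = 1 + int p^(v+j) * w1" "\<not> int p dvd w1" by blast
  obtain u where u: "v + j = Suc u" using assms(4) by (cases "v+j") auto
  obtain w' where "(1 + int p^(Suc u) * w1)^p = 1 + int p^(Suc (Suc u)) * w' \<and> \<not> int p dvd w'"
    using lte_step[OF assms(1,2) w1(2)] by blast
  moreover have "(1 + int p^v * w)^(p^Suc j) = ((1 + int p^v * w)^(p^j))^p"
    by (simp add: power_mult[symmetric] mult.commute)
  ultimately show ?case using w1 u by auto
qed




lemma digits_eq:
  assumes "p > 0"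
  shows "y1 < p^m \<Longrightarrow> y2 < p^m \<Longrightarrow> (\<forall>i<m. digit p y1 i = digit p y2 i) \<Longrightarrow> y1 = y2"
proof (induction m arbitrary: y1 y2)
  case 0 then show ?case by simp
next
  case (Suc m)
  have d: "digit p y (Suc i) = digit p (y div p) i" for y i
    by (simp add: digit_def div_mult2_eq)
  have "y1 div p = y2 div p"
    using Suc.prems assms
    by (intro Suc.IH) (auto simp: d[symmetric] less_mult_imp_div_less mult.commute)
  moreover have "y1 mod p = y2 mod p" using Suc.prems(3) by (auto simp: digit_def)
  ultimately show ?case by (metis div_mult_mod_eq)
qed

lemma digit_trunc:
  assumes "i < m" "p > 0"
  shows "digit p ((x div p^v) mod p^m) i = digit p x (v+i)"
proof -
  define j where "j = m - i - 1"
  have j: "m = i + Suc j" using assms unfolding j_def by simp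
  have "(x div p^v) mod p^m = (x div p^v) mod (p^i * p^(Suc j))" by (simp add: j power_add mult.left_commute)
  also have "\<dots> = p^i * ((x div p^v) div p^i mod p^(Suc j)) + (x div p^v) mod p^i"
    by (rule mod_mult2_eq)
  finally have e: "(x div p^v) mod p^m = p^i * ((x div p^v) div p^i mod p^(Suc j)) + (x div p^v) mod p^i" .
  have "((x div p^v) mod p^m) div p^i = (x div p^v) div p^i mod p^(Suc j)"
    unfolding e using assms(2) by simp
  then show ?thesis unfolding digit_def
    by (simp add: div_mult2_eq power_add mod_mod_cancel)
qed

lemma large_finite:
  assumes "p \<ge> 2"
  shows "{i. p \<le> 2*digit p x i} \<subseteq> {..<x}"
proof
  fix i assume "i \<in> {i. p \<le> 2*digit p x i}"
  then have h: "p \<le> 2*digit p x i" by simp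
  show "i \<in> {..<x}"
  proof (rule ccontr)
    assume "i \<notin> {..<x}"
    then have "x \<le> i" by simp
    also have "i < 2^i" by (rule less_exp)
    also have "2^i \<le> p^i" using assms by (simp add: power_mono)
    finally have "x div p^i = 0" by simp
    then show False using h assms by (simp add: digit_def)
  qed
qed

lemma card_subsets_bound:
  assumes "m \<ge> 1" "n \<ge> 1"
  shows "card {J. J \<subseteq> {..<m} \<and> card J < n} \<le> 2 * m^(n-1)"
proof -
  have eq: "{J. J \<subseteq> {..<m} \<and> card J < n} = (\<Union>j<n. {J. J \<subseteq> {..<m} \<and> card J = j})" by auto
  have "card {J. J \<subseteq> {..<m} \<and> card J < n} \<le> (\<Sum>j<n. card {J. J \<subseteq> {..<m} \<and> card J = j})"
    unfolding eq by (rule card_UN_le) simp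
  also have "\<dots> = (\<Sum>j<n. m choose j)" by (simp add: n_subsets)
  also have "\<dots> \<le> 2 * m^(n-1)"
  proof -
    have "(\<Sum>j<Suc k. m choose j) \<le> 2 * m^k" for k
    proof (induction k)
      case 0 then show ?case by simp
    next
      case (Suc k)
      have "(\<Sum>j<Suc (Suc k). m choose j) = (\<Sum>j<Suc k. m choose j) + (m choose Suc k)" by simp
      also have "\<dots> \<le> 2 * m^Suc k"
      proof (cases "m = 1")
        case True
        then show ?thesis
        proof (cases k)
          case 0 then show ?thesis using True by simp
        next
          case (Suc k') then show ?thesis using True Suc.IH by simp
        qed
      next
        case False
        then have m2: "m \<ge> 2" using assms by simp
        have c: "m choose Suc k \<le> m^Suc k"
        proof (cases "Suc k \<le> m")
          case True then show ?thesis by (rule binomial_le_pow)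
        next
          case False then show ?thesis by (simp add: binomial_eq_0)
        qed
        have h2: "2 * m^k \<le> m * m^k" using m2 by simp
        have "(\<Sum>j<Suc k. m choose j) + (m choose Suc k) \<le> 2 * m^k + m * m^k"
          using Suc.IH c by simp
        also have "\<dots> \<le> 2 * (m * m^k)" using h2 by simp
        finally show ?thesis by simp
      qed
      finally show ?case .
    qed
    from this[of "n-1"] show ?thesis using assms by simp
  qed
  finally show ?thesis .
qed

lemma card_B:
  assumes p: "p = 2*k+1" "k \<ge> 1"
  shows "card {y. y < p^m \<and> card {i. i<m \<and> p \<le> 2*digit p y i} < n}
     \<le> card {J. J \<subseteq> {..<m} \<and> card J < n} * (k+1)^m"
proof -
  define B where "B = {y. y < p^m \<and> card {i. i<m \<and> p \<le> 2*digit p y i} < n}"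
  define G where "G y = ({i. i<m \<and> p \<le> 2*digit p y i}, restrict (\<lambda>i. digit p y i mod (k+1)) {..<m})" for y
  define T where "T = {J. J \<subseteq> {..<m} \<and> card J < n} \<times> (PiE {..<m} (\<lambda>_. {..<k+1}))"
  have inj: "inj_on G B"
  proof (rule inj_onI)
    fix y1 y2 assume y: "y1 \<in> B" "y2 \<in> B" "G y1 = G y2"
    have "digit p y1 i = digit p y2 i" if i: "i < m" for i
    proof -
      have "fst (G y1) = fst (G y2)" using y(3) by simp
      then have "{i. i<m \<and> p \<le> 2*digit p y1 i} = {i. i<m \<and> p \<le> 2*digit p y2 i}"
        unfolding G_def by simp
      then have L: "(p \<le> 2*digit p y1 i) = (p \<le> 2*digit p y2 i)"
        using i by blast
      have "snd (G y1) i = snd (G y2) i" using y(3) by simp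
      then have M: "digit p y1 i mod (k+1) = digit p y2 i mod (k+1)"
        using i unfolding G_def by simp
      have b1: "digit p y1 i < 2*k+1" "digit p y2 i < 2*k+1" using p by (auto simp: digit_def)
      show ?thesis
      proof (cases "p \<le> 2*digit p y1 i")
        case True
        then have "digit p y1 i \<ge> k+1" "digit p y2 i \<ge> k+1" using L p by auto
        then have "digit p y1 i mod (k+1) = digit p y1 i - (k+1)" "digit p y2 i mod (k+1) = digit p y2 i - (k+1)"
          using b1 by (simp_all add: le_mod_geq)
        then show ?thesis using M \<open>digit p y1 i \<ge> k+1\<close> \<open>digit p y2 i \<ge> k+1\<close> by simp
      next
        case False
        then have "digit p y1 i < k+1" "digit p y2 i < k+1" using L p by auto
        then show ?thesis using M by simp
      qed
    qed
    then show "y1 = y2" using y(1,2) p digits_eq[of p y1 m y2] unfolding B_def by auto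
  qed
  have sub: "G ` B \<subseteq> T"
  proof
    fix z assume "z \<in> G ` B"
    then obtain y where y: "y \<in> B" "z = G y" by blast
    have "{i. i<m \<and> p \<le> 2*digit p y i} \<in> {J. J \<subseteq> {..<m} \<and> card J < n}"
      using y(1) unfolding B_def by auto
    moreover have "restrict (\<lambda>i. digit p y i mod (k+1)) {..<m} \<in> PiE {..<m} (\<lambda>_. {..<k+1})"
      by (simp add: restrict_PiE_iff)
    ultimately show "z \<in> T" using y(2) unfolding T_def G_def by simp
  qed
  have finJ: "finite {J. J \<subseteq> {..<m} \<and> card J < n}"
    by (rule finite_subset[of _ "Pow {..<m}"]) auto
  have finT: "finite T" unfolding T_def
    by (intro finite_cartesian_product finJ finite_PiE) auto
  have "card B = card (G ` B)" using inj by (simp add: card_image)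
  also have "\<dots> \<le> card T" using sub finT by (intro card_mono)
  also have "card T = card {J. J \<subseteq> {..<m} \<and> card J < n} * (k+1)^m"
    unfolding T_def by (simp add: card_cartesian_product card_PiE)
  finally show ?thesis unfolding B_def .
qed


lemma concave_ineq:
  fixes p \<theta> :: real
  assumes p: "p \<ge> 3" and t: "1 \<le> \<theta>" "\<theta> \<le> p"
  shows "\<theta> + 1 \<le> 2 * \<theta> powr (log p ((p+1)/2))"
proof -
  define c where "c = log p ((p+1)/2)"
  have c0: "0 \<le> c" using p unfolding c_def by (subst zero_le_log_cancel_iff) auto
  have c1: "c \<le> 1" using p unfolding c_def
    by (subst log_le_one_cancel_iff) auto
  have pc: "p powr c = (p+1)/2" using p unfolding c_def by simp
  have conc: "concave_on {1..p} (\<lambda>x. x powr c)"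
  proof (rule f''_le0_imp_concave)
    show "convex {1..p}" by simp
    show "((\<lambda>x. x powr c) has_real_derivative c * x powr (c - 1)) (at x)" if "x \<in> {1..p}" for x
      using that by (intro has_real_derivative_powr) auto
    show "((\<lambda>x. c * x powr (c - 1)) has_real_derivative c * ((c-1) * x powr (c - 1 - 1))) (at x)" if "x \<in> {1..p}" for x
      using that by (intro DERIV_cmult has_real_derivative_powr) auto
    show "c * ((c-1) * x powr (c - 1 - 1)) \<le> 0" if "x \<in> {1..p}" for x
    proof -
      have "(c-1) * x powr (c - 1 - 1) \<le> 0" using c1 by (intro mult_nonpos_nonneg) auto
      then show ?thesis by (rule mult_nonneg_nonpos[OF c0])
    qed
  qed
  define l where "l = (\<theta> - 1) / (p - 1)"
  have l: "0 \<le> l" "l \<le> 1" using t p unfolding l_def by auto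
  have e: "l * (p - 1) = \<theta> - 1" using p unfolding l_def by simp
  have th: "(1 - l) *\<^sub>R 1 + l *\<^sub>R p = \<theta>" using e by (simp add: algebra_simps)
  have "(1 - l) * 1 powr c + l * p powr c \<le> \<theta> powr c"
    using concave_onD[OF conc, of l 1 p] l p th by auto
  then have "(1 - l) + l * ((p+1)/2) \<le> \<theta> powr c" using pc by simp
  then have A: "2 * ((1 - l) + l * ((p+1)/2)) \<le> 2 * \<theta> powr c" by simp
  moreover have "2 * ((1 - l) + l * ((p+1)/2)) = \<theta> + 1" using e by (simp add: field_simps)
  ultimately show ?thesis unfolding c_def[symmetric] by simp
qed

lemma analytic:
  fixes p g a Q :: real and m e :: nat
  assumes p: "p \<ge> 3" and g: "1 \<le> g" "g \<le> p"
    and a1: "g * p^m \<le> a" and a2: "a \<le> g * p^(m+1)"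
    and Q: "g * Q \<le> a / p^m + g" and Q0: "0 \<le> Q"
  shows "g * Q * (2 * real m ^ e) * ((p+1)/2)^m \<le> 8 * (log p a) ^ e * a powr (log p ((p+1)/2))"
proof -
  define c where "c = log p ((p+1)/2)"
  define h where "h = (p+1)/2"
  have c1: "c \<le> 1" using p unfolding c_def by (subst log_le_one_cancel_iff) auto
  have pc: "p powr c = h" using p unfolding c_def h_def by simp
  have pm: "p^m > 0" using p by simp
  have apos: "a > 0" using a1 g pm by (smt (verit) mult_pos_pos)
  define \<phi> where "\<phi> = a / p^m"
  define \<theta> where "\<theta> = \<phi> / g"
  have \<phi>pos: "\<phi> > 0" using apos pm unfolding \<phi>_def by simp
  have t1: "1 \<le> \<theta>" using a1 g pm unfolding \<theta>_def \<phi>_def by (simp add: field_simps)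
  have t2: "\<theta> \<le> p" using a2 g pm unfolding \<theta>_def \<phi>_def by (simp add: field_simps)
  have "m \<le> log p a"
  proof -
    have "real m = log p (p^m)" using p by (simp add: log_nat_power)
    also have "\<dots> \<le> log p a" using p pm apos a1 g
      by (subst log_le_cancel_iff) (auto intro: order_trans[of _ "g * p^m"])
    finally show ?thesis .
  qed
  then have me: "real m ^ e \<le> (log p a) ^ e" by (intro power_mono) auto
  have gpow: "g powr (1 - c) \<le> 2"
  proof -
    have "g powr (1 - c) \<le> p powr (1 - c)" using c1 g by (intro powr_mono2) auto
    also have "\<dots> = p / h" using pc p by (simp add: powr_diff)
    also have "\<dots> \<le> 2" using p unfolding h_def by (simp add: field_simps)
    finally show ?thesis .
  qed
  have gQ: "g * Q \<le> 4 * \<phi> powr c"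
  proof -
    have "g * (\<theta> + 1) = a / p^m + g" using g unfolding \<theta>_def \<phi>_def by (simp add: field_simps)
    then have "g * Q \<le> g * (\<theta> + 1)" using Q by simp
    also have "\<dots> \<le> g * (2 * \<theta> powr c)" using concave_ineq[OF p t1 t2] g unfolding c_def by simp
    also have "\<dots> = 2 * (g powr (1 - c) * (g powr c * \<theta> powr c))"
      using g by (simp add: powr_diff)
    also have "g powr c * \<theta> powr c = \<phi> powr c" using g t1 unfolding \<theta>_def
      by (simp add: powr_mult[symmetric])
    also have "2 * (g powr (1 - c) * \<phi> powr c) \<le> 2 * (2 * \<phi> powr c)"
      using gpow by (intro mult_left_mono mult_right_mono) auto
    finally show ?thesis by simp
  qed
  have ac: "\<phi> powr c * h^m = a powr c"
  proof -
    have hp: "h > 0" using p unfolding h_def by simp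
    have "(p^m) powr c = (p powr real m) powr c" using p by (simp add: powr_realpow)
    also have "\<dots> = (p powr c) powr real m" by (simp add: powr_powr mult.commute)
    also have "\<dots> = h^m" using pc hp by (simp add: powr_realpow)
    finally have "(p^m) powr c = h^m" .
    then show ?thesis unfolding \<phi>_def using pm apos hp by (simp add: powr_divide)
  qed
  have hpos: "h^m \<ge> 0" using p unfolding h_def by simp
  have "g * Q * (2 * real m ^ e) * h^m \<le> (4 * \<phi> powr c) * (2 * (log p a) ^ e) * h^m"
  proof (rule mult_right_mono[OF mult_mono[OF gQ]])
    show "2 * real m ^ e \<le> 2 * log p a ^ e" using me by simp
    show "0 \<le> 4 * \<phi> powr c" by simp
    show "0 \<le> 2 * real m ^ e" by simp
  qed (rule hpos)
  also have "\<dots> = 8 * (log p a) ^ e * (\<phi> powr c * h^m)" by simp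
  finally show ?thesis using ac unfolding c_def h_def by simp
qed

lemma decomp:
  fixes p :: nat
  assumes "p > 1" "x > 0"
  shows "\<exists>v w. x = p^v * w \<and> \<not> p dvd w"
  using assms(2)
proof (induction x rule: less_induct)
  case (less x)
  show ?case
  proof (cases "p dvd x")
    case True
    then obtain y where y: "x = p * y" by blast
    then have "y < x" "y > 0" using less.prems assms(1) by auto
    then obtain v w where "y = p^v * w" "\<not> p dvd w" using less.IH by blast
    then have "x = p^(Suc v) * w" using y by simp
    then show ?thesis using \<open>\<not> p dvd w\<close> by blast
  next
    case False
    then show ?thesis by (intro exI[of _ 0] exI[of _ x]) simp
  qed
qed

theorem theorem2p9:
  fixes p \<alpha> a n :: nat
  assumes "prime p" and "odd p" and "\<alpha> > 1" and "coprime p \<alpha>"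
    and "a \<ge> 1" and "n \<ge> 1"
    and "a \<ge> ord p \<alpha> * p"
  shows "real (S p \<alpha> n a) \<le>
    8 * (log (real p) (real a)) ^ (n - 1) * (real a) powr (log (real p) ((real p + 1) / 2))"
proof -
  note pr = assms(1)
  have p3: "p \<ge> 3" using assms(1,2) prime_ge_2_nat[of p] by (cases "p = 2") auto
  obtain k where k: "p = 2*k+1" using assms(2) oddE by blast
  have k1: "k \<ge> 1" using p3 k by simp
  define \<gamma> where "\<gamma> = ord p \<alpha>"
  have g0: "\<gamma> > 0" using assms(4) unfolding \<gamma>_def by simp
  have gle: "\<gamma> \<le> p - 1"
  proof -
    have "\<gamma> dvd totient p" unfolding \<gamma>_def by (rule order_divides_totient[OF assms(4)])
    then show ?thesis using totient_prime[OF pr] p3 by (simp add: dvd_imp_le)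
  qed
  define \<beta> where "\<beta> = \<alpha>^\<gamma>"
  have b1: "\<beta> > 1" unfolding \<beta>_def using assms(3) g0 by (metis One_nat_def one_less_power)
  have bc: "[\<beta> = 1] (mod p)" unfolding \<beta>_def \<gamma>_def by (rule ord)
  have "p dvd \<beta> - 1" using cong_to_1_nat[OF bc] .
  obtain v w where vw: "\<beta> - 1 = p^v * w" "\<not> p dvd w"
    using decomp[of p "\<beta> - 1"] p3 b1 by auto
  have v1: "v \<ge> 1"
  proof (rule ccontr)
    assume "\<not> v \<ge> 1" then have "v = 0" by simp
    then show False using vw \<open>p dvd \<beta> - 1\<close> by simp
  qed
  have bint: "int \<beta> = 1 + int p^v * int w" using vw b1
    by (metis add.commute le_add_diff_inverse less_imp_le of_nat_1 of_nat_add of_nat_mult of_nat_power)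
  have wint: "\<not> int p dvd int w" using vw(2) by simp
  have LT: "\<exists>w'. int (\<beta>^(p^j)) = 1 + int p^(v+j) * w' \<and> \<not> int p dvd w'" for j
    using lte[OF pr assms(2) wint v1, of j] bint by simp
  have exm: "\<exists>m. a < \<gamma> * p^(m+1)"
  proof -
    have "a < 2^a" by (rule less_exp)
    also have "\<dots> \<le> p^a" using p3 by (simp add: power_mono)
    also have "\<dots> \<le> p^(a+1)" using p3 by (simp add: power_increasing)
    also have "\<dots> \<le> \<gamma> * p^(a+1)" using g0 by simp
    finally show ?thesis by blast
  qed
  define m where "m = (LEAST m. a < \<gamma> * p^(m+1))"
  have m_up: "a < \<gamma> * p^(m+1)" unfolding m_def by (rule LeastI_ex[OF exm])
  have m1: "m \<ge> 1"
  proof (rule ccontr)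
    assume "\<not> m \<ge> 1" then have "m = 0" by simp
    then show False using m_up assms(7) unfolding \<gamma>_def by simp
  qed
  have m_lo: "\<gamma> * p^m \<le> a"
  proof -
    obtain m' where m': "m = Suc m'" using m1 by (cases m) auto
    have "\<not> a < \<gamma> * p^(m'+1)" using m' unfolding m_def
      by (metis Suc_eq_plus1 lessI m'  m_def not_less_Least)
    then show ?thesis using m' by simp
  qed
  have pm0: "p^m > 0" "p^v > 0" using p3 by auto
  have cop: "coprime (p^(v+m)) \<beta>" using assms(4) unfolding \<beta>_def by simp
  have beta_pm: "[\<beta>^(p^m) = 1] (mod p^(v+m))"
  proof -
    obtain w' where "int (\<beta>^(p^m)) = 1 + int p^(v+m) * w'" using LT by blast
    then have "[int (\<beta>^(p^m)) = int 1] (mod int (p^(v+m)))"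
      by (simp add: cong_iff_dvd_diff)
    then show ?thesis by (simp only: cong_int_iff)
  qed
  have beta_pm1: "\<not> [\<beta>^(p^(m-1)) = 1] (mod p^(v+m))"
  proof
    assume "[\<beta>^(p^(m-1)) = 1] (mod p^(v+m))"
    then have c: "[int (\<beta>^(p^(m-1))) = int 1] (mod int (p^(v+m)))" by (simp only: cong_int_iff)
    obtain w' where w': "int (\<beta>^(p^(m-1))) = 1 + int p^(v+(m-1)) * w'" "\<not> int p dvd w'" using LT by blast
    have e: "v + m = Suc (v + (m-1))" using m1 by simp
    have "int p^(v+m) dvd int p^(v+(m-1)) * w'" using c w'(1) by (simp add: cong_iff_dvd_diff)
    then have "int p^(v+(m-1)) * int p dvd int p^(v+(m-1)) * w'" unfolding e by (simp add: mult.commute)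
    then have "int p dvd w'" using p3 by (subst (asm) dvd_times_left_cancel_iff) auto
    then show False using w'(2) by simp
  qed
  have ordb: "ord (p^(v+m)) \<beta> = p^m"
  proof -
    have "ord (p^(v+m)) \<beta> dvd p^m" using beta_pm by (simp add: ord_divides')
    then obtain i where i: "i \<le> m" "ord (p^(v+m)) \<beta> = p^i" using divides_primepow_nat[OF pr] by blast
    have "i = m"
    proof (rule ccontr)
      assume "i \<noteq> m"
      then have "p^i dvd p^(m-1)" using i(1) by (intro le_imp_power_dvd) simp
      then have "[\<beta>^(p^(m-1)) = 1] (mod p^(v+m))" using i(2) by (simp add: ord_divides')
      then show False using beta_pm1 by simp
    qed
    then show ?thesis using i by simp
  qed
  define M where "M = \<gamma> * p^m"
  have Mpos: "M > 0" using g0 pm0 unfolding M_def by simp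
  have sdec: "s = s mod \<gamma> + \<gamma> * (p^m * (s div M) + s div \<gamma> mod p^m)" for s
  proof -
    have "s div M = s div \<gamma> div p^m" unfolding M_def by (simp add: div_mult2_eq)
    then have "p^m * (s div M) + s div \<gamma> mod p^m = s div \<gamma>" by simp
    then show ?thesis by simp
  qed
  have powdec: "\<alpha>^s = \<alpha>^(s mod \<gamma>) * (\<beta>^(p^m))^(s div M) * \<beta>^(s div \<gamma> mod p^m)" for s
  proof -
    have "\<alpha>^s = \<alpha>^(s mod \<gamma> + \<gamma> * (p^m * (s div M) + s div \<gamma> mod p^m))"
      using sdec[of s] by simp
    also have "\<dots> = \<alpha>^(s mod \<gamma>) * (\<beta>^(p^m))^(s div M) * \<beta>^(s div \<gamma> mod p^m)"
      unfolding \<beta>_def by (simp add: power_add power_mult mult.assoc)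
    finally show ?thesis .
  qed
  have C1: "[\<alpha>^s = \<alpha>^(s mod \<gamma>) * \<beta>^(s div \<gamma> mod p^m)] (mod p^(v+m))" for s
  proof -
    have "[(\<beta>^(p^m))^(s div M) = 1^(s div M)] (mod p^(v+m))" by (rule cong_pow[OF beta_pm])
    then have "[\<alpha>^(s mod \<gamma>) * (\<beta>^(p^m))^(s div M) * \<beta>^(s div \<gamma> mod p^m) = \<alpha>^(s mod \<gamma>) * 1 * \<beta>^(s div \<gamma> mod p^m)] (mod p^(v+m))"
      by (intro cong_mult cong_refl) simp_all
    then show ?thesis using powdec[of s] by simp
  qed
  have bv: "[\<beta> = 1] (mod p^v)"
  proof -
    have "p^v dvd \<beta> - 1" using vw by simp
    then show ?thesis using b1 by (subst cong_altdef_nat) auto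
  qed
  have C2: "[\<alpha>^s = \<alpha>^(s mod \<gamma>)] (mod p^v)" for s
  proof -
    have "[\<beta>^(p^m * (s div M) + s div \<gamma> mod p^m) = 1^(p^m * (s div M) + s div \<gamma> mod p^m)] (mod p^v)"
      by (rule cong_pow[OF bv])
    then have "[\<alpha>^(s mod \<gamma>) * \<beta>^(p^m * (s div M) + s div \<gamma> mod p^m) = \<alpha>^(s mod \<gamma>) * 1] (mod p^v)"
      by (intro cong_mult cong_refl) simp
    moreover have "\<alpha>^s = \<alpha>^(s mod \<gamma>) * \<beta>^(p^m * (s div M) + s div \<gamma> mod p^m)"
      using sdec[of s] unfolding \<beta>_def by (metis power_add power_mult)
    ultimately show ?thesis by simp
  qed
  define Q where "Q = (a - 1) div M + 1"
  define B where "B = {y. y < p^m \<and> card {i. i<m \<and> p \<le> 2*digit p y i} < n}"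
  define A where "A = {s. s < a \<and> num_large_digits p (\<alpha>^s) < n}"
  define F where "F s = (s mod \<gamma>, s div M, (\<alpha>^s div p^v) mod p^m)" for s
  have injF: "inj_on F A"
  proof (rule inj_onI)
    fix s1 s2 assume s: "s1 \<in> A" "s2 \<in> A" "F s1 = F s2"
    have r: "s1 mod \<gamma> = s2 mod \<gamma>" and q: "s1 div M = s2 div M"
      and y: "(\<alpha>^s1 div p^v) mod p^m = (\<alpha>^s2 div p^v) mod p^m"
      using s(3) unfolding F_def by auto
    have lo: "\<alpha>^s1 mod p^v = \<alpha>^s2 mod p^v" using C2[of s1] C2[of s2] r unfolding cong_def by simp
    have "\<alpha>^s1 mod p^(v+m) = \<alpha>^s2 mod p^(v+m)"
      using lo y by (simp add: power_add mod_mult2_eq)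
    then have "[\<alpha>^(s1 mod \<gamma>) * \<beta>^(s1 div \<gamma> mod p^m) = \<alpha>^(s1 mod \<gamma>) * \<beta>^(s2 div \<gamma> mod p^m)] (mod p^(v+m))"
      using C1[of s1] C1[of s2] r unfolding cong_def by simp
    then have "[\<beta>^(s1 div \<gamma> mod p^m) = \<beta>^(s2 div \<gamma> mod p^m)] (mod p^(v+m))"
      using assms(4) by (subst (asm) cong_mult_lcancel_nat) (auto simp: coprime_commute)
    then have "[s1 div \<gamma> mod p^m = s2 div \<gamma> mod p^m] (mod p^m)"
      using order_divides_expdiff[OF cop] ordb by simp
    then have u: "s1 div \<gamma> mod p^m = s2 div \<gamma> mod p^m" using pm0 by (simp add: cong_def)
    show "s1 = s2" using sdec[of s1] sdec[of s2] r q u by simp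
  qed
  have imF: "F ` A \<subseteq> {..<\<gamma>} \<times> {..<Q} \<times> B"
  proof
    fix z assume "z \<in> F ` A"
    then obtain s where s: "s \<in> A" "z = F s" by blast
    have sa: "s < a" and nl: "num_large_digits p (\<alpha>^s) < n" using s(1) unfolding A_def by auto
    have "s div M < Q" unfolding Q_def using sa by (simp add: div_le_mono less_Suc_eq_le)
    moreover have "s mod \<gamma> < \<gamma>" using g0 by simp
    moreover have "(\<alpha>^s div p^v) mod p^m \<in> B"
    proof -
      define y where "y = (\<alpha>^s div p^v) mod p^m"
      have seq: "{i. i<m \<and> p \<le> 2*digit p y i} = {i. i<m \<and> p \<le> 2*digit p (\<alpha>^s) (v+i)}"
        unfolding y_def using digit_trunc[of _ m p] p3 by auto
      have "card {i. i<m \<and> p \<le> 2*digit p (\<alpha>^s) (v+i)} = card ((\<lambda>i. v+i) ` {i. i<m \<and> p \<le> 2*digit p (\<alpha>^s) (v+i)})"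
        by (simp add: card_image)
      also have "\<dots> \<le> card {j. p \<le> 2*digit p (\<alpha>^s) j}"
        using large_finite[of p "\<alpha>^s"] p3 by (intro card_mono) (auto intro: finite_subset)
      also have "\<dots> < n" using nl unfolding num_large_digits_def .
      finally have "card {i. i<m \<and> p \<le> 2*digit p y i} < n" unfolding seq .
      moreover have "y < p^m" unfolding y_def using pm0 by simp
      ultimately show ?thesis unfolding B_def y_def by simp
    qed
    ultimately show "z \<in> {..<\<gamma>} \<times> {..<Q} \<times> B" using s(2) unfolding F_def by simp
  qed
  have finB: "finite B" unfolding B_def by simp
  have "card A = card (F ` A)" using injF by (simp add: card_image)
  also have "\<dots> \<le> card ({..<\<gamma>} \<times> {..<Q} \<times> B)" using imF finB by (intro card_mono) auto
  also have "\<dots> = \<gamma> * Q * card B" by (simp add: card_cartesian_product)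
  also have "\<dots> \<le> \<gamma> * Q * (2 * m^(n-1) * (k+1)^m)"
  proof -
    have "card B \<le> card {J. J \<subseteq> {..<m} \<and> card J < n} * (k+1)^m"
      unfolding B_def by (rule card_B[OF k k1])
    also have "\<dots> \<le> 2 * m^(n-1) * (k+1)^m"
      using card_subsets_bound[OF m1 assms(6)] by simp
    finally show ?thesis by simp
  qed
  finally have cardA: "card A \<le> \<gamma> * Q * (2 * m^(n-1) * (k+1)^m)" .
  have SA: "S p \<alpha> n a = card A" unfolding S_def A_def by simp
  have hk: "real (k+1) = (real p + 1)/2" using k by simp
  have QM: "Q * M \<le> a + M"
  proof -
    have "(a - 1) div M * M \<le> a - 1" by (rule div_times_less_eq_dividend)
    then have "(a - 1) div M * M \<le> a" by linarith
    then show ?thesis unfolding Q_def by (simp add: algebra_simps)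
  qed
  have Qr: "real \<gamma> * real Q \<le> real a / real p^m + real \<gamma>"
  proof -
    have "real Q * (real \<gamma> * real p^m) \<le> real a + real \<gamma> * real p^m"
      using QM unfolding M_def by (metis of_nat_add of_nat_le_iff of_nat_mult of_nat_power)
    then show ?thesis using pm0 by (simp add: field_simps)
  qed
  have an: "real \<gamma> * real Q * (2 * real m ^ (n-1)) * ((real p + 1)/2)^m
       \<le> 8 * (log (real p) (real a)) ^ (n-1) * (real a) powr (log (real p) ((real p + 1)/2))"
  proof (rule analytic)
    show "3 \<le> real p" using p3 by simp
    show "1 \<le> real \<gamma>" using g0 by simp
    show "real \<gamma> \<le> real p" using gle by simp
    show "real \<gamma> * real p ^ m \<le> real a" using m_lo by (metis of_nat_le_iff of_nat_mult of_nat_power)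
    show "real a \<le> real \<gamma> * real p ^ (m + 1)" using m_up
      by (metis less_imp_le of_nat_le_iff of_nat_mult of_nat_power)
    show "real \<gamma> * real Q \<le> real a / real p ^ m + real \<gamma>" by (rule Qr)
    show "0 \<le> real Q" by simp
  qed
  have "real (S p \<alpha> n a) \<le> real (\<gamma> * Q * (2 * m^(n-1) * (k+1)^m))" unfolding SA of_nat_le_iff by (rule cardA)
  also have "\<dots> = real \<gamma> * real Q * (2 * real m ^ (n-1)) * ((real p + 1)/2)^m"
    unfolding of_nat_mult of_nat_power hk[symmetric] by simp
  finally show ?thesis using an by linarith
qed

end
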